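(* Let $G$ be a complete graph on $n$ vertices and let $f_0,f_t$ be token-placements of $G$ such that $D(f_0,f_t)$ has a cycle cover. Let $|\mathcal{C}^*(f_0,f_t)|$ denote the maximum number of cycles in a cycle cover of $D(f_0,f_t)$. Then $\mathrm{OPT}(f_0,f_t)\ge n-|\mathcal{C}^*(f_0,f_t)|$. (Together with the upper bound, $\mathrm{OPT}(f_0,f_t)=n-|\mathcal{C}^*(f_0,f_t)|$.)
   Context: A token-placement of $G=(V,E)$ with colors $C=\{1,\dots,c\}$ is a surjective map $f\colon V\to C$. Two distinct token-placements $f,f'$ are adjacent if there is an edge $uv\in E$ with $f'(u)=f(v)$, $f'(v)=f(u)$ and $f'(w)=f(w)$ for all other $w$. A swapping sequence between $f$ and $f'$ is a sequence $f_1=f,\dots,f_h=f'$ of token-placements with consecutive members adjacent; its length is $h-1$; $\mathrm{OPT}(f,f')$ is the minimum length of such a sequence. The destination graph $D(f,f_t)$ is the directed graph on vertex set $V$ with an arc $(u,v)$ (for all $u,v\in V$, including $u=v$) whenever $f(u)=f_t(v)$. A (vertex-disjoint) cycle cover of a directed graph is a set of vertex-disjoint directed cycles (self-loops count as cycles of length 1) covering every vertex. *)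

theory Defs
  imports Main "HOL-Library.Extended_Nat"
begin

text \<open>Graph: finite vertex set V, edge set E given as a set of ordered pairs
(an undirected edge uv is represented by both (u,v) and (v,u)).\<close>

definition complete_graph :: "'a set \<Rightarrow> ('a \<times> 'a) set \<Rightarrow> bool" where
  "complete_graph V E \<longleftrightarrow> E = {(u,v). u \<in> V \<and> v \<in> V \<and> u \<noteq> v}"

text \<open>Token placement with colours {1..c}: surjective map V \<rightarrow> {1..c};
outside V the map is fixed to 0 (convention, functions are extensional).\<close>

definition token_placement :: "'a set \<Rightarrow> nat \<Rightarrow> ('a \<Rightarrow> nat) \<Rightarrow> bool" where
  "token_placement V c f \<longleftrightarrow> f ` V = {1..c} \<and> (\<forall>w. w \<notin> V \<longrightarrow> f w = 0)"

definition tp_adjacent :: "('a \<times> 'a) set \<Rightarrow> ('a \<Rightarrow> nat) \<Rightarrow> ('a \<Rightarrow> nat) \<Rightarrow> bool" where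
  "tp_adjacent E f f' \<longleftrightarrow> f \<noteq> f' \<and>
     (\<exists>u v. (u, v) \<in> E \<and> f' u = f v \<and> f' v = f u \<and> (\<forall>w. w \<noteq> u \<and> w \<noteq> v \<longrightarrow> f' w = f w))"

definition swapping_sequence ::
  "'a set \<Rightarrow> ('a \<times> 'a) set \<Rightarrow> nat \<Rightarrow> ('a \<Rightarrow> nat) \<Rightarrow> ('a \<Rightarrow> nat) \<Rightarrow> ('a \<Rightarrow> nat) list \<Rightarrow> bool" where
  "swapping_sequence V E c f f' fs \<longleftrightarrow> fs \<noteq> [] \<and> hd fs = f \<and> last fs = f' \<and>
     (\<forall>g \<in> set fs. token_placement V c g) \<and>
     (\<forall>i. Suc i < length fs \<longrightarrow> tp_adjacent E (fs ! i) (fs ! Suc i))"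

definition OPT :: "'a set \<Rightarrow> ('a \<times> 'a) set \<Rightarrow> nat \<Rightarrow> ('a \<Rightarrow> nat) \<Rightarrow> ('a \<Rightarrow> nat) \<Rightarrow> enat" where
  "OPT V E c f f' = (INF fs \<in> {fs. swapping_sequence V E c f f' fs}. enat (length fs - 1))"

definition dest_graph :: "'a set \<Rightarrow> ('a \<Rightarrow> nat) \<Rightarrow> ('a \<Rightarrow> nat) \<Rightarrow> ('a \<times> 'a) set" where
  "dest_graph V f ft = {(u, v). u \<in> V \<and> v \<in> V \<and> f u = ft v}"

text \<open>A directed cycle is represented by its arc set: the arcs
x_0 x_1, ..., x_{k-1} x_0 of a nonempty list of distinct vertices
(k = 1 gives a self-loop).\<close>

definition cycle_arcs :: "'a list \<Rightarrow> ('a \<times> 'a) set" where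
  "cycle_arcs xs = {(xs ! i, xs ! ((i + 1) mod length xs)) | i. i < length xs}"

definition is_dcycle :: "('a \<times> 'a) set \<Rightarrow> ('a \<times> 'a) set \<Rightarrow> bool" where
  "is_dcycle A C \<longleftrightarrow> (\<exists>xs. xs \<noteq> [] \<and> distinct xs \<and> C = cycle_arcs xs \<and> C \<subseteq> A)"

definition cycle_verts :: "('a \<times> 'a) set \<Rightarrow> 'a set" where
  "cycle_verts C = fst ` C"

definition is_cycle_cover :: "'a set \<Rightarrow> ('a \<times> 'a) set \<Rightarrow> ('a \<times> 'a) set set \<Rightarrow> bool" where
  "is_cycle_cover V A CC \<longleftrightarrow> (\<forall>C \<in> CC. is_dcycle A C) \<and>
     (\<forall>C \<in> CC. \<forall>C' \<in> CC. C \<noteq> C' \<longrightarrow> cycle_verts C \<inter> cycle_verts C' = {}) \<and>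
     (\<Union>C \<in> CC. cycle_verts C) = V"

definition max_cycles :: "'a set \<Rightarrow> ('a \<Rightarrow> nat) \<Rightarrow> ('a \<Rightarrow> nat) \<Rightarrow> nat" where
  "max_cycles V f ft = Max {card CC | CC. is_cycle_cover V (dest_graph V f ft) CC}"

end

theory Submission imports Defs begin

definition orb :: "('a \<Rightarrow> 'a) \<Rightarrow> 'a \<Rightarrow> 'a set" where
  "orb p x = range (\<lambda>i. (p ^^ i) x)"

definition arcs :: "('a \<Rightarrow> 'a) \<Rightarrow> 'a \<Rightarrow> ('a \<times> 'a) set" where
  "arcs p x = (\<lambda>y. (y, p y)) ` orb p x"

definition per :: "('a \<Rightarrow> 'a) \<Rightarrow> 'a \<Rightarrow> nat" where
  "per p x = (LEAST k. k > 0 \<and> (p ^^ k) x = x)"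

lemma funpow_in: "p ` S \<subseteq> S \<Longrightarrow> x \<in> S \<Longrightarrow> (p ^^ i) x \<in> S"
  by (induction i) auto

lemma funpow_inj: "inj_on p S \<Longrightarrow> p ` S \<subseteq> S \<Longrightarrow> inj_on (p ^^ n) S"
proof (induction n)
  case 0 then show ?case by simp
next
  case (Suc n)
  have "(p ^^ n) ` S \<subseteq> S" using funpow_in[OF Suc.prems(2)] by blast
  then have "inj_on p ((p ^^ n) ` S)" using Suc.prems(1) inj_on_subset by blast
  then show ?case using comp_inj_on[OF Suc.IH[OF Suc.prems]] by (simp add: o_def)
qed

lemma exists_period:
  assumes "finite S" "bij_betw p S S" "x \<in> S"
  shows "\<exists>k>0. (p ^^ k) x = x"
proof -
  have inj: "inj_on p S" and im: "p ` S = S"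
    using bij_betw_imp_inj_on[OF assms(2)] bij_betw_imp_surj_on[OF assms(2)] by auto
  have "\<not> inj_on (\<lambda>i. (p ^^ i) x) {0..card S}"
  proof
    assume i: "inj_on (\<lambda>i. (p ^^ i) x) {0..card S}"
    have "(\<lambda>i. (p ^^ i) x) ` {0..card S} \<subseteq> S" using funpow_in[of p S x] im assms(3) by auto
    then have "card ((\<lambda>i. (p ^^ i) x) ` {0..card S}) \<le> card S" using assms(1) card_mono by blast
    with card_image[OF i] show False by simp
  qed
  then obtain i j where ij: "i < j" "(p ^^ i) x = (p ^^ j) x"
    unfolding inj_on_def by (metis linorder_neqE_nat)
  have "(p ^^ i) ((p ^^ (j - i)) x) = (p ^^ j) x"
    using ij(1) by (metis funpow_add le_add_diff_inverse less_imp_le o_apply)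
  then have "(p ^^ i) ((p ^^ (j - i)) x) = (p ^^ i) x" using ij by simp
  moreover have "(p ^^ (j - i)) x \<in> S" using funpow_in[of p S x] im assms(3) by auto
  ultimately have "(p ^^ (j - i)) x = x"
    using funpow_inj[OF inj, of i] im assms(3) unfolding inj_on_def by auto
  then show ?thesis using ij(1) by (intro exI[of _ "j - i"]) auto
qed

context
  fixes S and p :: "'a \<Rightarrow> 'a"
  assumes fin: "finite S" and bij: "bij_betw p S S"
begin

lemma im: "p ` S = S" using bij_betw_imp_surj_on[OF bij] .
lemma inj: "inj_on p S" using bij_betw_imp_inj_on[OF bij] .

lemma per_props:
  assumes "x \<in> S"
  shows "per p x > 0" "(p ^^ per p x) x = x" "\<And>m. 0 < m \<Longrightarrow> m < per p x \<Longrightarrow> (p ^^ m) x \<noteq> x"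
proof -
  obtain k where "k > 0 \<and> (p ^^ k) x = x" using exists_period[OF fin bij assms] by blast
  then have *: "per p x > 0 \<and> (p ^^ per p x) x = x" unfolding per_def by (rule LeastI)
  then show "per p x > 0" "(p ^^ per p x) x = x" by auto
  show "\<And>m. 0 < m \<Longrightarrow> m < per p x \<Longrightarrow> (p ^^ m) x \<noteq> x"
    unfolding per_def using not_less_Least by blast
qed

lemma orb_sub: "x \<in> S \<Longrightarrow> orb p x \<subseteq> S"
  unfolding orb_def using funpow_in[of p S x] im by auto

lemma orb_per: "x \<in> S \<Longrightarrow> orb p x = (\<lambda>i. (p ^^ i) x) ` {..<per p x}"
proof
  assume x: "x \<in> S"
  show "orb p x \<subseteq> (\<lambda>i. (p ^^ i) x) ` {..<per p x}"
  proof
    fix y assume "y \<in> orb p x"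
    then obtain i where "y = (p ^^ i) x" unfolding orb_def by auto
    then have "y = (p ^^ (i mod per p x)) x" using funpow_mod_eq[OF per_props(2)[OF x]] by simp
    moreover have "i mod per p x < per p x" using per_props(1)[OF x] by simp
    ultimately show "y \<in> (\<lambda>i. (p ^^ i) x) ` {..<per p x}" by blast
  qed
qed (auto simp: orb_def)

lemma orb_self: "x \<in> orb p x"
  unfolding orb_def by (metis funpow_0 rangeI)

lemma orb_mem: "x \<in> S \<Longrightarrow> z \<in> orb p x \<Longrightarrow> orb p z = orb p x"
proof -
  assume x: "x \<in> S" and "z \<in> orb p x"
  then obtain i where z: "z = (p ^^ i) x" unfolding orb_def by auto
  let ?k = "per p x"
  show "orb p z = orb p x"
  proof
    show "orb p z \<subseteq> orb p x"
    proof
      fix y assume "y \<in> orb p z"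
      then obtain j where "y = (p ^^ j) z" unfolding orb_def by auto
      then have "y = (p ^^ (j + i)) x" unfolding z by (simp add: funpow_add)
      then show "y \<in> orb p x" unfolding orb_def by blast
    qed
    show "orb p x \<subseteq> orb p z"
    proof
      fix y assume "y \<in> orb p x"
      then obtain j where y: "y = (p ^^ j) x" unfolding orb_def by auto
      have k: "?k > 0" using per_props(1)[OF x] .
      define m where "m = j + ?k * i - i"
      have "i \<le> ?k * i" using k by simp
      then have mi: "m + i = j + ?k * i" unfolding m_def by linarith
      have "(p ^^ m) z = (p ^^ (m + i)) x" unfolding z by (simp add: funpow_add)
      also have "\<dots> = (p ^^ (j + ?k * i)) x" using mi by simp
      also have "\<dots> = (p ^^ ((j + ?k * i) mod ?k)) x"
        using funpow_mod_eq[OF per_props(2)[OF x], of "j + ?k * i"] by (rule sym)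
      also have "\<dots> = (p ^^ (j mod ?k)) x" by simp
      also have "\<dots> = y" using funpow_mod_eq[OF per_props(2)[OF x]] y by simp
      finally show "y \<in> orb p z" unfolding orb_def by (metis rangeI)
    qed
  qed
qed

lemma arcs_cycle:
  assumes x: "x \<in> S"
  shows "\<exists>xs. xs \<noteq> [] \<and> distinct xs \<and> arcs p x = cycle_arcs xs"
proof -
  let ?k = "per p x"
  define xs where "xs = map (\<lambda>i. (p ^^ i) x) [0..<?k]"
  have k: "?k > 0" using per_props(1)[OF x] .
  have len: "length xs = ?k" unfolding xs_def by simp
  have nth: "\<And>i. i < ?k \<Longrightarrow> xs ! i = (p ^^ i) x" unfolding xs_def by simp
  have "distinct xs"
  proof (rule ccontr)
    assume "\<not> distinct xs"
    then obtain i j where ij: "i < j" "j < ?k" "xs ! i = xs ! j"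
      unfolding distinct_conv_nth len by (metis linorder_neqE_nat)
    then have e: "(p ^^ i) x = (p ^^ j) x" using nth by simp
    have "(p ^^ i) ((p ^^ (j - i)) x) = (p ^^ j) x"
      using ij(1) by (metis funpow_add le_add_diff_inverse less_imp_le o_apply)
    then have "(p ^^ i) ((p ^^ (j - i)) x) = (p ^^ i) x" using e by simp
    moreover have "(p ^^ (j - i)) x \<in> S" using funpow_in[of p S x] im x by auto
    ultimately have "(p ^^ (j - i)) x = x"
      using funpow_inj[OF inj, of i] im x unfolding inj_on_def by auto
    then show False using per_props(3)[OF x, of "j - i"] ij by simp
  qed
  moreover have "arcs p x = cycle_arcs xs"
  proof -
    have "cycle_arcs xs = {((p ^^ i) x, p ((p ^^ i) x)) | i. i < ?k}"
    proof -
      have "\<And>i. i < ?k \<Longrightarrow> xs ! ((i + 1) mod ?k) = p ((p ^^ i) x)"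
      proof -
        fix i assume "i < ?k"
        have "xs ! ((i + 1) mod ?k) = (p ^^ ((i + 1) mod ?k)) x" using nth k by simp
        also have "\<dots> = (p ^^ (i + 1)) x" using funpow_mod_eq[OF per_props(2)[OF x]] by simp
        finally show "xs ! ((i + 1) mod ?k) = p ((p ^^ i) x)" by simp
      qed
      then show ?thesis unfolding cycle_arcs_def len using nth by force
    qed
    also have "\<dots> = arcs p x" unfolding arcs_def orb_per[OF x] by auto
    finally show ?thesis by simp
  qed
  ultimately show ?thesis using k len by (intro exI[of _ xs]) auto
qed

lemma verts_arcs: "cycle_verts (arcs p x) = orb p x"
  unfolding cycle_verts_def arcs_def by (simp add: image_image)

lemma cover:
  assumes A: "\<forall>x\<in>S. (x, p x) \<in> A"
  shows "is_cycle_cover S A (arcs p ` S)"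
  unfolding is_cycle_cover_def
proof (intro conjI ballI impI)
  fix C assume "C \<in> arcs p ` S"
  then obtain x where x: "x \<in> S" "C = arcs p x" by auto
  have "C \<subseteq> A" using x A orb_sub[OF x(1)] unfolding arcs_def by auto
  then show "is_dcycle A C" unfolding is_dcycle_def using arcs_cycle[OF x(1)] x by auto
next
  fix C C' assume "C \<in> arcs p ` S" "C' \<in> arcs p ` S" "C \<noteq> C'"
  then obtain x y where "x \<in> S" "y \<in> S" "C = arcs p x" "C' = arcs p y" "arcs p x \<noteq> arcs p y" by auto
  then have xy: "x \<in> S" "y \<in> S" "C = arcs p x" "C' = arcs p y" "arcs p x \<noteq> arcs p y" .
  show "cycle_verts C \<inter> cycle_verts C' = {}"
  proof (rule ccontr)
    assume "cycle_verts C \<inter> cycle_verts C' \<noteq> {}"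
    then obtain z where "z \<in> orb p x" "z \<in> orb p y" unfolding xy verts_arcs by blast
    then have "orb p x = orb p y" using orb_mem[OF xy(1)] orb_mem[OF xy(2)] by metis
    then have "arcs p x = arcs p y" unfolding arcs_def by simp
    then show False using xy(5) by simp
  qed
next
  show "(\<Union>C\<in>arcs p ` S. cycle_verts C) = S"
    using orb_sub orb_self by (auto simp: verts_arcs)
qed

lemma orb_in_block: "p ` B \<subseteq> B \<Longrightarrow> x \<in> B \<Longrightarrow> orb p x \<subseteq> B"
  unfolding orb_def using funpow_in[of p B x] by auto

lemma count:
  assumes ne: "\<forall>B\<in>P. B \<noteq> {}" and un: "\<Union>P = S"
    and dj: "\<forall>B\<in>P. \<forall>B'\<in>P. B \<noteq> B' \<longrightarrow> B \<inter> B' = {}"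
    and pres: "\<forall>B\<in>P. \<forall>x\<in>B. p x \<in> B"
  shows "card P \<le> card (arcs p ` S)"
proof -
  define h where "h B = arcs p (SOME x. x \<in> B)" for B
  have sel: "\<And>B. B \<in> P \<Longrightarrow> (SOME x. x \<in> B) \<in> B" using ne by (metis ex_in_conv someI_ex)
  have "inj_on h P"
  proof (rule inj_onI)
    fix B B' assume B: "B \<in> P" "B' \<in> P" "h B = h B'"
    let ?x = "SOME x. x \<in> B" and ?y = "SOME x. x \<in> B'"
    have "orb p ?x = orb p ?y" using B(3) unfolding h_def by (metis verts_arcs)
    then have "?x \<in> orb p ?y" using orb_self by metis
    moreover have "orb p ?y \<subseteq> B'" using orb_in_block[of B' ?y] pres B(2) sel[OF B(2)] by blast
    ultimately have "?x \<in> B \<inter> B'" using sel[OF B(1)] by blast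
    then show "B = B'" using dj B(1,2) by blast
  qed
  moreover have "h ` P \<subseteq> arcs p ` S" unfolding h_def using sel un by blast
  ultimately show ?thesis using card_inj_on_le fin by (metis finite_imageI)
qed

end

definition swp :: "'a \<Rightarrow> 'a \<Rightarrow> 'a \<Rightarrow> 'a" where
  "swp u v y = (if y = u then v else if y = v then u else y)"

definition good :: "'a set \<Rightarrow> ('a \<Rightarrow> nat) \<Rightarrow> ('a \<Rightarrow> nat) \<Rightarrow> nat \<Rightarrow> bool" where
  "good V f ft L \<longleftrightarrow> (\<exists>P \<pi>. (\<forall>B\<in>P. B \<noteq> {}) \<and> \<Union>P = V \<and>
     (\<forall>B\<in>P. \<forall>B'\<in>P. B \<noteq> B' \<longrightarrow> B \<inter> B' = {}) \<and> finite P \<and>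
     card V \<le> card P + L \<and> bij_betw \<pi> V V \<and> (\<forall>x\<in>V. f x = ft (\<pi> x)) \<and>
     (\<forall>B\<in>P. \<forall>x\<in>B. \<pi> x \<in> B))"

lemma good_base: "finite V \<Longrightarrow> good V f f 0"
  unfolding good_def
  apply (rule exI[of _ "(\<lambda>x. {x}) ` V"], rule exI[of _ id])
  apply (auto simp: card_image)
  done

lemma good_step:
  assumes fin: "finite V" and cg: "complete_graph V E" and adj: "tp_adjacent E f g"
    and G: "good V g ft L"
  shows "good V f ft (Suc L)"
proof -
  obtain u v where uv: "(u, v) \<in> E" "g u = f v" "g v = f u" "\<forall>w. w \<noteq> u \<and> w \<noteq> v \<longrightarrow> g w = f w"
    using adj unfolding tp_adjacent_def by blast
  have uvV: "u \<in> V" "v \<in> V" "u \<noteq> v" using uv(1) cg unfolding complete_graph_def by auto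
  let ?t = "swp u v"
  have ft: "\<And>x. f x = g (?t x)" using uv unfolding swp_def by auto
  have tV: "\<And>x. x \<in> V \<Longrightarrow> ?t x \<in> V" using uvV unfolding swp_def by auto
  have tt: "\<And>x. ?t (?t x) = x" unfolding swp_def by auto
  have h1: "\<forall>a\<in>V. ?t (?t a) = a" using tt by simp
  have h3: "?t ` V \<subseteq> V"
  proof
    fix y assume "y \<in> ?t ` V"
    then obtain x where "x \<in> V" "y = ?t x" by blast
    then show "y \<in> V" using tV by simp
  qed
  have bt: "bij_betw ?t V V" using bij_betw_byWitness[OF h1 h1 h3 h3] .
  obtain P \<pi> where P: "\<forall>B\<in>P. B \<noteq> {}" "\<Union>P = V"
     "\<forall>B\<in>P. \<forall>B'\<in>P. B \<noteq> B' \<longrightarrow> B \<inter> B' = {}" "finite P"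
     "card V \<le> card P + L" "bij_betw \<pi> V V" "\<forall>x\<in>V. g x = ft (\<pi> x)"
     "\<forall>B\<in>P. \<forall>x\<in>B. \<pi> x \<in> B"
    using G unfolding good_def by (elim exE conjE) (rule that)
  have b': "bij_betw (\<pi> \<circ> ?t) V V" using bij_betw_trans[OF bt P(6)] .
  have e': "\<forall>x\<in>V. f x = ft ((\<pi> \<circ> ?t) x)" using ft P(7) tV by auto
  obtain Bu where Bu: "Bu \<in> P" "u \<in> Bu" using P(2) uvV by blast
  obtain Bv where Bv: "Bv \<in> P" "v \<in> Bv" using P(2) uvV by blast
  show ?thesis
  proof (cases "Bu = Bv")
    case True
    have "\<forall>B\<in>P. \<forall>x\<in>B. (\<pi> \<circ> ?t) x \<in> B"
    proof (intro ballI)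
      fix B x assume B: "B \<in> P" "x \<in> B"
      have "?t x \<in> B"
      proof (cases "x = u \<or> x = v")
        case True
        then have "B = Bu" using B Bu Bv \<open>Bu = Bv\<close> P(3) by blast
        then show ?thesis using True Bu Bv \<open>Bu = Bv\<close> unfolding swp_def by auto
      next
        case False then show ?thesis using B unfolding swp_def by auto
      qed
      then show "(\<pi> \<circ> ?t) x \<in> B" using P(8) B by auto
    qed
    then show ?thesis unfolding good_def using P(1-5) b' e'
      by (intro exI[of _ P] exI[of _ "\<pi> \<circ> ?t"]) auto
  next
    case False
    define P' where "P' = insert (Bu \<union> Bv) (P - {Bu, Bv})"
    have notin: "Bu \<union> Bv \<notin> P - {Bu, Bv}"
    proof
      assume "Bu \<union> Bv \<in> P - {Bu, Bv}"
      then have a: "Bu \<union> Bv \<in> P" "Bu \<union> Bv \<noteq> Bu" by auto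
      have "(Bu \<union> Bv) \<inter> Bu = {}" using P(3)[rule_format, OF a(1) Bu(1) a(2)] .
      then show False using Bu(2) by auto
    qed
    have cP: "card (P - {Bu, Bv}) = card P - 2"
      using Bu Bv False P(4) by (simp add: card_Diff_subset)
    have c2: "card P \<ge> 2"
    proof -
      have "{Bu, Bv} \<subseteq> P" using Bu Bv by auto
      then have "card {Bu, Bv} \<le> card P" using P(4) card_mono by blast
      then show ?thesis using False by simp
    qed
    have cP': "card P' = card P - 1"
      unfolding P'_def using notin cP c2 P(4) by simp
    have pres: "\<forall>B\<in>P'. \<forall>x\<in>B. (\<pi> \<circ> ?t) x \<in> B"
    proof (intro ballI)
      fix B x assume B: "B \<in> P'" "x \<in> B"
      show "(\<pi> \<circ> ?t) x \<in> B"
      proof (cases "B = Bu \<union> Bv")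
        case True
        then have "?t x \<in> Bu \<or> ?t x \<in> Bv" using B Bu Bv unfolding swp_def by auto
        then show ?thesis using True P(8) Bu Bv by auto
      next
        case F: False
        then have BP: "B \<in> P" "B \<noteq> Bu" "B \<noteq> Bv" using B unfolding P'_def by auto
        then have "x \<noteq> u" "x \<noteq> v" using P(3) Bu Bv B(2) by blast+
        then show ?thesis using BP P(8) B(2) unfolding swp_def by auto
      qed
    qed
    have part1: "\<forall>B\<in>P'. B \<noteq> {}" using P(1) Bu unfolding P'_def by auto
    have part2: "\<Union>P' = V"
    proof
      show "\<Union>P' \<subseteq> V" using P(2) Bu Bv unfolding P'_def by auto
      show "V \<subseteq> \<Union>P'"
      proof
        fix x assume "x \<in> V"
        then obtain B where B: "B \<in> P" "x \<in> B" using P(2) by auto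
        show "x \<in> \<Union>P'"
        proof (cases "B = Bu \<or> B = Bv")
          case True then show ?thesis using B unfolding P'_def by auto
        next
          case False then show ?thesis using B unfolding P'_def by auto
        qed
      qed
    qed
    have part3: "\<forall>B\<in>P'. \<forall>B'\<in>P'. B \<noteq> B' \<longrightarrow> B \<inter> B' = {}"
    proof (intro ballI impI)
      fix B B' assume B: "B \<in> P'" "B' \<in> P'" "B \<noteq> B'"
      have d: "\<And>X. X \<in> P \<Longrightarrow> X \<noteq> Bu \<Longrightarrow> X \<noteq> Bv \<Longrightarrow> X \<inter> (Bu \<union> Bv) = {}"
        using P(3) Bu(1) Bv(1) by blast
      show "B \<inter> B' = {}"
      proof (cases "B = Bu \<union> Bv")
        case True
        then have "B' \<in> P" "B' \<noteq> Bu" "B' \<noteq> Bv" using B unfolding P'_def by auto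
        then show ?thesis using d True by blast
      next
        case F: False
        then have B1: "B \<in> P" "B \<noteq> Bu" "B \<noteq> Bv" using B unfolding P'_def by auto
        show ?thesis
        proof (cases "B' = Bu \<union> Bv")
          case True then show ?thesis using d B1 by blast
        next
          case False
          then have "B' \<in> P" using B unfolding P'_def by auto
          then show ?thesis using P(3) B1 B(3) by blast
        qed
      qed
    qed
    have finP': "finite P'" unfolding P'_def using P(4) by simp
    have "card V \<le> card P' + Suc L" using cP' P(5) c2 by simp
    then show ?thesis unfolding good_def using part1 part2 part3 finP' b' e' pres
      by (intro exI[of _ P'] exI[of _ "\<pi> \<circ> ?t"]) simp
  qed
qed

lemma seq_good:
  assumes fin: "finite V" and cg: "complete_graph V E"
  shows "fs \<noteq> [] \<Longrightarrow> last fs = ft \<Longrightarrow>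
    (\<forall>i. Suc i < length fs \<longrightarrow> tp_adjacent E (fs ! i) (fs ! Suc i)) \<Longrightarrow>
    good V (hd fs) ft (length fs - 1)"
proof (induction fs)
  case Nil then show ?case by simp
next
  case (Cons f fs)
  show ?case
  proof (cases fs)
    case Nil then show ?thesis using Cons.prems good_base[OF fin] by simp
  next
    case (Cons g rest)
    have ne: "fs \<noteq> []" using \<open>fs = g # rest\<close> by simp
    have la: "last fs = ft" using Cons.prems(2) ne by simp
    have ad: "\<forall>i. Suc i < length fs \<longrightarrow> tp_adjacent E (fs ! i) (fs ! Suc i)"
    proof (intro allI impI)
      fix i assume "Suc i < length fs"
      then have "Suc (Suc i) < length (f # fs)" by simp
      then have "tp_adjacent E ((f # fs) ! Suc i) ((f # fs) ! Suc (Suc i))"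
        using Cons.prems(3) by blast
      then show "tp_adjacent E (fs ! i) (fs ! Suc i)" by simp
    qed
    have "good V (hd fs) ft (length fs - 1)" using Cons.IH[OF ne la ad] .
    then have ih: "good V g ft (length fs - 1)" using \<open>fs = g # rest\<close> by simp
    have "tp_adjacent E f g" using Cons.prems(3)[rule_format, of 0] \<open>fs = g # rest\<close> by simp
    from good_step[OF fin cg this ih] show ?thesis using \<open>fs = g # rest\<close> by simp
  qed
qed

theorem mainTheorem15:
  fixes V :: "'a set" and E :: "('a \<times> 'a) set" and n c :: nat
    and f0 ft :: "'a \<Rightarrow> nat"
  assumes "finite V" and "card V = n"
    and "complete_graph V E"
    and "token_placement V c f0" and "token_placement V c ft"
    and "\<exists>CC. is_cycle_cover V (dest_graph V f0 ft) CC"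
  shows "OPT V E c f0 ft \<ge> enat (n - max_cycles V f0 ft)"
  unfolding OPT_def
proof (rule INF_greatest)
  fix fs assume "fs \<in> {fs. swapping_sequence V E c f0 ft fs}"
  then have sq: "fs \<noteq> []" "hd fs = f0" "last fs = ft"
    "\<forall>i. Suc i < length fs \<longrightarrow> tp_adjacent E (fs ! i) (fs ! Suc i)"
    unfolding swapping_sequence_def by auto
  have "good V (hd fs) ft (length fs - 1)" by (rule seq_good[OF assms(1,3) sq(1,3,4)])
  then have "good V f0 ft (length fs - 1)" unfolding sq(2) .
  then obtain P \<pi> where P: "\<forall>B\<in>P. B \<noteq> {}" "\<Union>P = V"
     "\<forall>B\<in>P. \<forall>B'\<in>P. B \<noteq> B' \<longrightarrow> B \<inter> B' = {}" "finite P"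
     "card V \<le> card P + (length fs - 1)" "bij_betw \<pi> V V" "\<forall>x\<in>V. f0 x = ft (\<pi> x)"
     "\<forall>B\<in>P. \<forall>x\<in>B. \<pi> x \<in> B"
    unfolding good_def by (elim exE conjE) (rule that)
  have pV: "\<And>x. x \<in> V \<Longrightarrow> \<pi> x \<in> V" by (rule bij_betw_apply[OF P(6)])
  have A: "\<forall>x\<in>V. (x, \<pi> x) \<in> dest_graph V f0 ft"
    using P(7) pV unfolding dest_graph_def by auto
  have cov: "is_cycle_cover V (dest_graph V f0 ft) (arcs \<pi> ` V)"
    using cover[OF assms(1) P(6) A] .
  have cnt: "card P \<le> card (arcs \<pi> ` V)" using count[OF assms(1) P(6) P(1-3) P(8)] .
  have dg: "dest_graph V f0 ft \<subseteq> V \<times> V" unfolding dest_graph_def by auto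
  have "{CC. is_cycle_cover V (dest_graph V f0 ft) CC} \<subseteq> Pow (Pow (V \<times> V))"
  proof
    fix CC assume "CC \<in> {CC. is_cycle_cover V (dest_graph V f0 ft) CC}"
    then have "\<forall>C\<in>CC. is_dcycle (dest_graph V f0 ft) C" unfolding is_cycle_cover_def by simp
    then have "\<forall>C\<in>CC. C \<subseteq> V \<times> V" using dg unfolding is_dcycle_def by fast
    then show "CC \<in> Pow (Pow (V \<times> V))" by fast
  qed
  moreover have "finite (Pow (Pow (V \<times> V)))" using assms(1) by simp
  ultimately have "finite {CC. is_cycle_cover V (dest_graph V f0 ft) CC}"
    by (rule finite_subset)
  then have "finite (card ` {CC. is_cycle_cover V (dest_graph V f0 ft) CC})"
    by (rule finite_imageI)
  moreover have "{card CC | CC. is_cycle_cover V (dest_graph V f0 ft) CC}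
      = card ` {CC. is_cycle_cover V (dest_graph V f0 ft) CC}" by auto
  ultimately have fm: "finite {card CC | CC. is_cycle_cover V (dest_graph V f0 ft) CC}"
    by simp
  have mem: "card (arcs \<pi> ` V) \<in> {card CC | CC. is_cycle_cover V (dest_graph V f0 ft) CC}"
    using cov by auto
  have "card (arcs \<pi> ` V) \<le> max_cycles V f0 ft"
    unfolding max_cycles_def by (rule Max_ge[OF fm mem])
  then have "n - max_cycles V f0 ft \<le> length fs - 1" using cnt P(5) assms(2) by linarith
  then show "enat (n - max_cycles V f0 ft) \<le> enat (length fs - 1)" by simp
qed

end
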